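(* Let $r=r(n)\ge 2$ with $r=o(n^{2/5})$. Let $\mathcal D$ be the event that there exists an $r$-subset of $[n]$ which intersects each of $e_1,\dots,e_{3r}$ but is disjoint from $\bigcap_{j=1}^{3r}e_j$. Then $\Pr(\mathcal D\mid\mathcal B_{3r}\cap\mathcal A_4)=o(1)$ as $n\to\infty$.
   Context: Random intersecting process: Let $[n]=\{1,\dots,n\}$ and $\binom{[n]}{r}$ the family of $r$-subsets of $[n]$. Choose $e_1$ uniformly at random from $\binom{[n]}{r}$. Given $\mathcal F_i=\{e_1,\dots,e_i\}$, let $\mathcal A(\mathcal F_i)=\{e\in\binom{[n]}{r}: e\notin\mathcal F_i,\ e\cap e_j\neq\emptyset \text{ for all } 1\le j\le i\}$, and choose $e_{i+1}$ uniformly at random from $\mathcal A(\mathcal F_i)$. The process halts when $\mathcal A(\mathcal F_i)=\emptyset$. A star is a collection of sets such that every pair of them has the same one-element intersection $\{x\}$ ($x$ is the kernel); a single set is a $1$-star by convention. For $i\ge1$, $\mathcal A_i$ is the event that at least $i$ edges are chosen and $\mathcal F_i$ is an $i$-star. For $i\ge3$, $\mathcal B_i$ is the event that at least $i$ edges are chosen and $\bigcap_{j=1}^i e_j\neq\emptyset$. *)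

theory Defs
  imports "HOL-Probability.Probability" "HOL-Library.Landau_Symbols"
begin

definition adm :: "nat \<Rightarrow> nat \<Rightarrow> nat set list \<Rightarrow> nat set set" where
  "adm n r F = {e. e \<subseteq> {1..n} \<and> card e = r \<and> e \<notin> set F \<and> (\<forall>f\<in>set F. e \<inter> f \<noteq> {})}"

primrec proc :: "nat \<Rightarrow> nat \<Rightarrow> nat \<Rightarrow> nat set list pmf" where
  "proc n r 0 = return_pmf []"
| "proc n r (Suc k) = bind_pmf (proc n r k)
     (\<lambda>F. if adm n r F = {} then return_pmf F
          else map_pmf (\<lambda>e. F @ [e]) (pmf_of_set (adm n r F)))"

definition is_star :: "nat \<Rightarrow> nat set list \<Rightarrow> bool" where
  "is_star i F \<longleftrightarrow> (\<exists>x. \<forall>j<i. \<forall>k<i. j \<noteq> k \<longrightarrow> F ! j \<inter> F ! k = {x})"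

definition evA :: "nat \<Rightarrow> nat set list \<Rightarrow> bool" where
  "evA i F \<longleftrightarrow> i \<le> length F \<and> is_star i F"

definition evB :: "nat \<Rightarrow> nat set list \<Rightarrow> bool" where
  "evB i F \<longleftrightarrow> i \<le> length F \<and> \<Inter> (set (take i F)) \<noteq> {}"

definition evD :: "nat \<Rightarrow> nat \<Rightarrow> nat set list \<Rightarrow> bool" where
  "evD n r F \<longleftrightarrow> (\<exists>s. s \<subseteq> {1..n} \<and> card s = r \<and>
       (\<forall>j<3*r. s \<inter> F ! j \<noteq> {}) \<and> s \<inter> \<Inter> (set (take (3*r) F)) = {})"

end

theory Submission
  imports Defs
begin


definition step :: "nat \<Rightarrow> nat \<Rightarrow> nat set list \<Rightarrow> nat set list pmf" where
  "step n r F = (if adm n r F = {} then return_pmf F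
          else map_pmf (\<lambda>e. F @ [e]) (pmf_of_set (adm n r F)))"

fun procH :: "nat \<Rightarrow> nat \<Rightarrow> nat set list \<Rightarrow> nat \<Rightarrow> nat set list pmf" where
  "procH n r H 0 = return_pmf H"
| "procH n r H (Suc k) = bind_pmf (step n r H) (\<lambda>H'. procH n r H' k)"

lemma procH_Suc': "procH n r H (Suc k) = bind_pmf (procH n r H k) (step n r)"
proof (induction k arbitrary: H)
  case 0 then show ?case by (simp add: bind_return_pmf bind_return_pmf')
next
  case (Suc k)
  have "procH n r H (Suc (Suc k)) = bind_pmf (step n r H) (\<lambda>H'. bind_pmf (procH n r H' k) (step n r))"
    using Suc by simp
  also have "\<dots> = bind_pmf (procH n r H (Suc k)) (step n r)"
    by (simp add: bind_assoc_pmf)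
  finally show ?case .
qed

lemma proc_eq: "proc n r k = procH n r [] k"
proof (induction k)
  case 0 then show ?case by simp
next
  case (Suc k) then show ?case by (simp del: procH.simps add: procH_Suc' step_def[abs_def])
qed

lemma procH_add: "procH n r H (a + b) = bind_pmf (procH n r H a) (\<lambda>H'. procH n r H' b)"
proof (induction a arbitrary: H)
  case 0 then show ?case by (simp add: bind_return_pmf)
next
  case (Suc a) then show ?case by (simp add: bind_assoc_pmf)
qed

lemma adm_finite: "finite (adm n r F)"
proof -
  have "adm n r F \<subseteq> Pow {1..n}" unfolding adm_def by auto
  then show ?thesis by (rule finite_subset) simp
qed

lemma set_step: "F' \<in> set_pmf (step n r F) \<Longrightarrow> F' = F \<or> (\<exists>e\<in>adm n r F. F' = F @ [e])"
  by (auto simp: step_def adm_finite split: if_splits)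

lemma set_procH:
  assumes "F \<in> set_pmf (procH n r H k)"
  shows "take (length H) F = H \<and> length F \<le> length H + k \<and>
     (\<forall>j. length H \<le> j \<and> j < length F \<longrightarrow> F!j \<subseteq> {1..n} \<and> card (F!j) = r)"
  using assms
proof (induction k arbitrary: H)
  case 0 then show ?case by auto
next
  case (Suc k)
  then obtain H' where H': "H' \<in> set_pmf (step n r H)" "F \<in> set_pmf (procH n r H' k)" by auto
  from Suc.IH[OF H'(2)] have IH: "take (length H') F = H'" "length F \<le> length H' + k"
    "\<forall>j. length H' \<le> j \<and> j < length F \<longrightarrow> F!j \<subseteq> {1..n} \<and> card (F!j) = r" by auto
  from set_step[OF H'(1)] show ?case
  proof
    assume "H' = H" then show ?thesis using IH by auto
  next
    assume "\<exists>e\<in>adm n r H. H' = H @ [e]"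
    then obtain e where e: "e \<in> adm n r H" "H' = H @ [e]" by auto
    have t0: "take (Suc (length H)) F = H @ [e]" using IH(1) e(2) by simp
    have t: "take (length H) F = H"
    proof -
      have "take (length H) F = take (length H) (take (Suc (length H)) F)" by simp
      also have "\<dots> = H" using t0 by simp
      finally show ?thesis .
    qed
    have lenF: "length F \<ge> Suc (length H)" using IH(1) e(2)
      by (metis length_append_singleton length_take min.bounded_iff t0 order_refl)
    have nth: "F ! length H = e"
    proof -
      have "F ! length H = take (Suc (length H)) F ! length H" using lenF by simp
      then show ?thesis using t0 by simp
    qed
    have ead: "e \<subseteq> {1..n} \<and> card e = r" using e(1) unfolding adm_def by auto
    have "\<forall>j. length H \<le> j \<and> j < length F \<longrightarrow> F ! j \<subseteq> {1..n} \<and> card (F ! j) = r"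
    proof (intro allI impI)
      fix j assume j: "length H \<le> j \<and> j < length F"
      show "F ! j \<subseteq> {1..n} \<and> card (F ! j) = r"
      proof (cases "j = length H")
        case True then show ?thesis using nth ead by simp
      next
        case False then show ?thesis using IH(3) j e(2) by auto
      qed
    qed
    then show ?thesis using t IH(2) e(2) by simp
  qed
qed

lemma integrable_prob[simp]: "integrable (measure_pmf M) (\<lambda>x. measure_pmf.prob (N x) X)"
  by (rule measure_pmf.integrable_const_bound[where B=1]) auto

lemma prob_bind_pmf:
  "measure_pmf.prob (bind_pmf M N) X = measure_pmf.expectation M (\<lambda>x. measure_pmf.prob (N x) X)"
proof -
  have "ennreal (measure_pmf.prob (bind_pmf M N) X) = emeasure (bind_pmf M N) X"
    by (simp add: measure_pmf.emeasure_eq_measure)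
  also have "\<dots> = (\<integral>\<^sup>+x. ennreal (measure_pmf.prob (N x) X) \<partial>M)"
    by (subst emeasure_bind_pmf) (simp add: measure_pmf.emeasure_eq_measure)
  also have "\<dots> = ennreal (measure_pmf.expectation M (\<lambda>x. measure_pmf.prob (N x) X))"
    by (rule nn_integral_eq_integral) auto
  finally show ?thesis by (simp add: integral_nonneg_AE)
qed

lemma prob_procH_Suc:
  assumes "adm n r H \<noteq> {}"
  shows "measure_pmf.prob (procH n r H (Suc k)) A =
    (\<Sum>e\<in>adm n r H. measure_pmf.prob (procH n r (H@[e]) k) A) / card (adm n r H)"
proof -
  have "procH n r H (Suc k) = bind_pmf (pmf_of_set (adm n r H)) (\<lambda>e. procH n r (H@[e]) k)"
    using assms by (simp add: step_def map_pmf_def bind_assoc_pmf bind_return_pmf)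
  then show ?thesis using assms
    by (simp add: prob_bind_pmf integral_pmf_of_set adm_finite)
qed

lemma procH_halt:
  assumes "adm n r H = {}"
  shows "procH n r H k = return_pmf H"
  using assms by (induction k) (auto simp: step_def bind_return_pmf)

lemma card_supersets:
  assumes "finite U" "T \<subseteq> U" "card T \<le> r"
  shows "card {e. e \<subseteq> U \<and> card e = r \<and> T \<subseteq> e} = (card U - card T) choose (r - card T)"
proof -
  have fT: "finite T" using assms finite_subset by blast
  have "bij_betw (\<lambda>e. e - T) {e. e \<subseteq> U \<and> card e = r \<and> T \<subseteq> e} {B. B \<subseteq> U - T \<and> card B = r - card T}"
  proof (rule bij_betwI[where g="\<lambda>B. B \<union> T"])
    show "(\<lambda>e. e - T) \<in> {e. e \<subseteq> U \<and> card e = r \<and> T \<subseteq> e} \<rightarrow> {B. B \<subseteq> U - T \<and> card B = r - card T}"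
      using fT by (auto simp: card_Diff_subset)
    show "(\<lambda>B. B \<union> T) \<in> {B. B \<subseteq> U - T \<and> card B = r - card T} \<rightarrow> {e. e \<subseteq> U \<and> card e = r \<and> T \<subseteq> e}"
    proof
      fix B assume B: "B \<in> {B. B \<subseteq> U - T \<and> card B = r - card T}"
      have fB: "finite B" using B assms(1) finite_subset by blast
      have "card (B \<union> T) = card B + card T" using B fB fT by (subst card_Un_disjoint) auto
      then show "B \<union> T \<in> {e. e \<subseteq> U \<and> card e = r \<and> T \<subseteq> e}" using B assms by auto
    qed
  qed auto
  then have "card {e. e \<subseteq> U \<and> card e = r \<and> T \<subseteq> e} = card {B. B \<subseteq> U - T \<and> card B = r - card T}"
    by (rule bij_betw_same_card)
  also have "\<dots> = card (U - T) choose (r - card T)" using assms by (simp add: n_subsets)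
  also have "card (U - T) = card U - card T" using assms fT by (simp add: card_Diff_subset)
  finally show ?thesis .
qed

lemma card_supersets_le:
  assumes "finite U" "T \<subseteq> U"
  shows "card {e. e \<subseteq> U \<and> card e = r \<and> T \<subseteq> e} \<le> (card U - card T) choose (r - card T)"
proof (cases "card T \<le> r")
  case True then show ?thesis using card_supersets[OF assms] by simp
next
  case False
  have "{e. e \<subseteq> U \<and> card e = r \<and> T \<subseteq> e} = {}"
  proof (rule ccontr)
    assume "{e. e \<subseteq> U \<and> card e = r \<and> T \<subseteq> e} \<noteq> {}"
    then obtain e where e: "e \<subseteq> U" "card e = r" "T \<subseteq> e" by auto
    have "finite e" using e assms finite_subset by blast
    then have "card T \<le> card e" using e card_mono by blast
    then show False using False e by simp
  qed
  then show ?thesis by (metis card.empty zero_le)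
qed

lemma card_hit_le:
  assumes U: "finite U" and AU: "\<forall>j<k. A j \<subseteq> U" and disj: "\<forall>i<k. \<forall>j<k. i \<noteq> j \<longrightarrow> A i \<inter> A j = {}"
  shows "card {e. e \<subseteq> U \<and> card e = r \<and> (\<forall>j<k. e \<inter> A j \<noteq> {})}
     \<le> (\<Prod>j<k. card (A j)) * ((card U - k) choose (r - k))"
proof -
  let ?P = "PiE {..<k} A"
  let ?S = "\<lambda>f. {e. e \<subseteq> U \<and> card e = r \<and> f ` {..<k} \<subseteq> e}"
  have finA: "finite (A j)" if "j < k" for j using that AU by (intro finite_subset[OF _ U]) simp
  have finP: "finite ?P" using finA by (intro finite_PiE) auto
  have sub: "{e. e \<subseteq> U \<and> card e = r \<and> (\<forall>j<k. e \<inter> A j \<noteq> {})} \<subseteq> (\<Union>f\<in>?P. ?S f)"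
  proof
    fix e assume e: "e \<in> {e. e \<subseteq> U \<and> card e = r \<and> (\<forall>j<k. e \<inter> A j \<noteq> {})}"
    define f where "f = (\<lambda>j. if j < k then (SOME y. y \<in> e \<inter> A j) else undefined)"
    have fj: "f j \<in> e \<inter> A j" if j: "j < k" for j
    proof -
      have "\<exists>y. y \<in> e \<inter> A j" using e j by blast
      then have "(SOME y. y \<in> e \<inter> A j) \<in> e \<inter> A j" by (rule someI_ex)
      then show ?thesis using j by (simp add: f_def)
    qed
    have "f \<in> ?P"
    proof (rule PiE_I)
      fix j assume "j \<in> {..<k}" then show "f j \<in> A j" using fj by blast
    next
      fix j assume "j \<notin> {..<k}" then show "f j = undefined" by (simp add: f_def)
    qed
    moreover have "f ` {..<k} \<subseteq> e" using fj by blast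
    then have "e \<in> ?S f" using e by blast
    ultimately show "e \<in> (\<Union>f\<in>?P. ?S f)" by blast
  qed
  have each: "card (?S f) \<le> (card U - k) choose (r - k)" if f: "f \<in> ?P" for f
  proof -
    have inj: "inj_on f {..<k}"
    proof
      fix i j assume ij: "i \<in> {..<k}" "j \<in> {..<k}" "f i = f j"
      show "i = j"
      proof (rule ccontr)
        assume "i \<noteq> j"
        then have "A i \<inter> A j = {}" using disj ij(1,2) by simp
        moreover have "f i \<in> A i" using PiE_mem[OF f ij(1)] .
        moreover have "f j \<in> A j" using PiE_mem[OF f ij(2)] .
        ultimately show False using ij(3) by (metis disjoint_iff)
      qed
    qed
    have cT: "card (f ` {..<k}) = k" using inj by (simp add: card_image)
    have TU: "f ` {..<k} \<subseteq> U" using PiE_mem[OF f] AU by blast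
    have "card (?S f) \<le> (card U - card (f ` {..<k})) choose (r - card (f ` {..<k}))"
      by (rule card_supersets_le[OF U TU])
    then show ?thesis unfolding cT .
  qed
  have "card {e. e \<subseteq> U \<and> card e = r \<and> (\<forall>j<k. e \<inter> A j \<noteq> {})} \<le> card (\<Union>f\<in>?P. ?S f)"
  proof (rule card_mono[OF _ sub])
    show "finite (\<Union>f\<in>?P. ?S f)"
    proof (rule finite_subset[of _ "Pow U"])
      show "(\<Union>f\<in>?P. ?S f) \<subseteq> Pow U" by blast
    qed (use U in auto)
  qed
  also have "\<dots> \<le> (\<Sum>f\<in>?P. card (?S f))" by (rule card_UN_le[OF finP])
  also have "\<dots> \<le> (\<Sum>f\<in>?P. (card U - k) choose (r - k))" by (rule sum_mono) (rule each)
  also have "\<dots> = card ?P * ((card U - k) choose (r - k))" by simp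
  also have "card ?P = (\<Prod>j<k. card (A j))" by (simp add: card_PiE)
  finally show ?thesis .
qed

definition Xs :: "nat \<Rightarrow> nat \<Rightarrow> nat \<Rightarrow> nat set set" where
  "Xs n r x = {e. e \<subseteq> {1..n} \<and> card e = r \<and> x \<in> e}"
definition Hs :: "nat \<Rightarrow> nat \<Rightarrow> nat \<Rightarrow> nat set \<Rightarrow> nat set set" where
  "Hs n r x s = {e. e \<subseteq> {1..n} \<and> card e = r \<and> x \<in> e \<and> e \<inter> s \<noteq> {}}"
definition Ys :: "nat \<Rightarrow> nat \<Rightarrow> nat \<Rightarrow> nat set list \<Rightarrow> nat set set" where
  "Ys n r x H = {e. e \<subseteq> {1..n} \<and> card e = r \<and> x \<notin> e \<and> (\<forall>j<3. e \<inter> H!j \<noteq> {})}"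

lemma finite_Xs: "finite (Xs n r x)"
  by (rule finite_subset[of _ "Pow {1..n}"]) (auto simp: Xs_def)
lemma finite_Hs: "finite (Hs n r x s)"
  by (rule finite_subset[of _ "Pow {1..n}"]) (auto simp: Hs_def)
lemma finite_Ys: "finite (Ys n r x s)"
  by (rule finite_subset[of _ "Pow {1..n}"]) (auto simp: Ys_def)

lemma Xs_sub_adm:
  assumes "\<forall>j<length H. x \<in> H!j"
  shows "Xs n r x - set H \<subseteq> adm n r H"
  using assms unfolding Xs_def adm_def by (auto simp: in_set_conv_nth) (metis IntI empty_iff)

lemma card_adm_ge:
  assumes "\<forall>j<length H. x \<in> H!j"
  shows "real (card (adm n r H)) \<ge> real (card (Xs n r x)) - real (length H)"
proof -
  have "card (Xs n r x) - card (set H) \<le> card (Xs n r x - set H)" by (rule diff_card_le_card_Diff) simp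
  also have "\<dots> \<le> card (adm n r H)" by (rule card_mono[OF adm_finite Xs_sub_adm[OF assms]])
  finally have "card (Xs n r x) - card (set H) \<le> card (adm n r H)" .
  moreover have "card (set H) \<le> length H" by (rule card_length)
  ultimately show ?thesis by linarith
qed

lemma procH_next:
  assumes "F \<in> set_pmf (procH n r (H @ [e]) k)"
  shows "length H < length F \<and> F ! length H = e"
proof -
  have t: "take (Suc (length H)) F = H @ [e]" using set_procH[OF assms] by simp
  then have l: "length H < length F"
    by (metis length_append_singleton length_take lessI min.strict_boundedE not_less_eq less_Suc_eq_le min_def)
  have "F ! length H = take (Suc (length H)) F ! length H" using l by simp
  then show ?thesis using t l by simp
qed

lemma prob_zeroI: "(\<And>F. F \<in> set_pmf p \<Longrightarrow> F \<notin> A) \<Longrightarrow> measure_pmf.prob p A = 0"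
  by (subst measure_pmf_zero_iff) blast

lemma W_bound:
  assumes "\<forall>j<length H. x \<in> H!j" "length H + k \<le> m" "real (card (Xs n r x)) > real m"
  shows "measure_pmf.prob (procH n r H k)
     {F. length F = length H + k \<and> (\<forall>j<length F. x \<in> F!j \<and> F!j \<inter> s \<noteq> {})}
     \<le> (real (card (Hs n r x s)) / (real (card (Xs n r x)) - real m)) ^ k"
  using assms
proof (induction k arbitrary: H)
  case 0 then show ?case by simp
next
  case (Suc k)
  let ?q = "real (card (Hs n r x s)) / (real (card (Xs n r x)) - real m)"
  let ?A = "\<lambda>H. {F. length F = length H + k \<and> (\<forall>j<length F. x \<in> F!j \<and> F!j \<inter> s \<noteq> {})}"
  have cadm: "real (card (adm n r H)) \<ge> real (card (Xs n r x)) - real m"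
    using card_adm_ge[OF Suc.prems(1), of n r] Suc.prems(2) by linarith
  then have adm0: "adm n r H \<noteq> {}" using Suc.prems(3) by auto
  have q0: "?q \<ge> 0" using Suc.prems(3) by simp
  have eqA: "{F. length F = length H + Suc k \<and> (\<forall>j<length F. x \<in> F!j \<and> F!j \<inter> s \<noteq> {})} = ?A (H @ [e])" for e
    by simp
  have tm: "measure_pmf.prob (procH n r (H @ [e]) k) (?A (H @ [e])) \<le> (if e \<in> Hs n r x s then ?q ^ k else 0)"
    if e: "e \<in> adm n r H" for e
  proof (cases "e \<in> Hs n r x s")
    case True
    have "\<forall>j<length (H @ [e]). x \<in> (H @ [e])!j" using Suc.prems(1) True
      by (auto simp: Hs_def nth_append)
    moreover have "length (H @ [e]) + k \<le> m" using Suc.prems(2) by simp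
    ultimately show ?thesis using Suc.IH[of "H @ [e]"] Suc.prems(3) True by simp
  next
    case False
    have "measure_pmf.prob (procH n r (H @ [e]) k) (?A (H @ [e])) = 0"
    proof (rule prob_zeroI)
      fix F assume F: "F \<in> set_pmf (procH n r (H @ [e]) k)"
      from procH_next[OF F] have l: "length H < length F" and fe: "F ! length H = e" by auto
      show "F \<notin> ?A (H @ [e])"
      proof
        assume "F \<in> ?A (H @ [e])"
        then have "x \<in> F ! length H \<and> F ! length H \<inter> s \<noteq> {}" using l by blast
        then show False using False e fe by (auto simp: Hs_def adm_def)
      qed
    qed
    then show ?thesis using False by simp
  qed
  have "measure_pmf.prob (procH n r H (Suc k)) (?A (H @ [undefined])) =
      (\<Sum>e\<in>adm n r H. measure_pmf.prob (procH n r (H @ [e]) k) (?A (H @ [e]))) / card (adm n r H)"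
    using prob_procH_Suc[OF adm0, of k "?A (H @ [undefined])"] by simp
  also have "\<dots> \<le> (\<Sum>e\<in>adm n r H. (if e \<in> Hs n r x s then ?q ^ k else 0)) / card (adm n r H)"
    by (intro divide_right_mono sum_mono tm) auto
  also have "(\<Sum>e\<in>adm n r H. (if e \<in> Hs n r x s then ?q ^ k else 0)) / card (adm n r H) = real (card (adm n r H \<inter> Hs n r x s)) * ?q ^ k / card (adm n r H)"
    by (simp add: sum.If_cases adm_finite)
  also have "\<dots> \<le> real (card (Hs n r x s)) * ?q ^ k / card (adm n r H)"
    by (intro divide_right_mono mult_right_mono) (auto intro!: card_mono finite_Hs simp: q0)
  also have "\<dots> \<le> real (card (Hs n r x s)) * ?q ^ k / (real (card (Xs n r x)) - real m)"
    using Suc.prems(3) q0 cadm by (intro divide_left_mono cadm) (auto intro!: mult_pos_pos)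
  also have "\<dots> = ?q ^ Suc k" by simp
  finally show ?case by simp
qed

lemma ratio_mono:
  fixes a N m X :: real
  assumes "a \<ge> N - m" "N - m > 0" "X \<ge> 0" "m \<ge> 0"
  shows "(N - m) / (N + X) \<le> a / (a + X)"
proof -
  have "(N - m) * (a + X) \<le> a * (N + X)"
  proof -
    have "a * (N + X) - (N - m) * (a + X) = a * m + X * (a - (N - m))" by (simp add: algebra_simps)
    also have "\<dots> \<ge> 0" using assms by (intro add_nonneg_nonneg mult_nonneg_nonneg) auto
    finally show ?thesis by simp
  qed
  then show ?thesis using assms by (simp add: divide_simps)
qed

lemma V_bound:
  assumes "\<forall>j<length H. x \<in> H!j" "length H + k \<le> m" "real (card (Xs n r x)) > real m"
    "card (Ys n r x H) \<le> Xb" "3 \<le> length H"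
  shows "measure_pmf.prob (procH n r H k) {F. length F = length H + k \<and> (\<forall>j<length F. x \<in> F!j)}
     \<ge> ((real (card (Xs n r x)) - real m) / (real (card (Xs n r x)) + real Xb)) ^ k"
  using assms
proof (induction k arbitrary: H)
  case 0 then show ?case by simp
next
  case (Suc k)
  define N where "N = real (card (Xs n r x))"
  let ?v = "(N - real m) / (N + real Xb)"
  let ?A = "\<lambda>H. {F. length F = length H + k \<and> (\<forall>j<length F. x \<in> F!j)}"
  have Nm: "N - real m > 0" using Suc.prems(3) N_def by simp
  have v0: "?v \<ge> 0" using Nm by simp
  define a where "a = card (adm n r H \<inter> Xs n r x)"
  have a_ge: "real a \<ge> N - real m"
  proof -
    have "card (Xs n r x) - card (set H) \<le> card (Xs n r x - set H)" by (rule diff_card_le_card_Diff) simp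
    also have "\<dots> \<le> a" unfolding a_def
      using Xs_sub_adm[OF Suc.prems(1), of n r] by (intro card_mono) (auto simp: adm_finite)
    finally have "card (Xs n r x) - card (set H) \<le> a" .
    moreover have "card (set H) \<le> length H" by (rule card_length)
    ultimately show ?thesis using Suc.prems(2) N_def by linarith
  qed
  have adm_le: "real (card (adm n r H)) \<le> real a + real Xb"
  proof -
    have "adm n r H - Xs n r x \<subseteq> Ys n r x H"
    proof
      fix e assume e: "e \<in> adm n r H - Xs n r x"
      have "\<forall>j<3. e \<inter> H!j \<noteq> {}"
      proof (intro allI impI)
        fix j :: nat assume "j < 3"
        then have "H ! j \<in> set H" using Suc.prems(5) by (intro nth_mem) simp
        then show "e \<inter> H!j \<noteq> {}" using e unfolding adm_def by blast
      qed
      then show "e \<in> Ys n r x H" using e unfolding adm_def Xs_def Ys_def by auto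
    qed
    then have "card (adm n r H - Xs n r x) \<le> Xb" using Suc.prems(4)
      by (meson card_mono finite_Ys le_trans)
    moreover have "card (adm n r H) = a + card (adm n r H - Xs n r x)" unfolding a_def
      using adm_finite by (metis card_Int_Diff)
    ultimately show ?thesis by simp
  qed
  have adm0: "adm n r H \<noteq> {}" using a_ge Nm unfolding a_def by auto
  have cpos: "real (card (adm n r H)) > 0" using adm0 adm_finite by (simp add: card_gt_0_iff)
  have tm: "measure_pmf.prob (procH n r (H @ [e]) k) (?A (H @ [e])) \<ge> (if e \<in> Xs n r x then ?v ^ k else 0)"
    if e: "e \<in> adm n r H" for e
  proof (cases "e \<in> Xs n r x")
    case True
    have "\<forall>j<length (H @ [e]). x \<in> (H @ [e])!j" using Suc.prems(1) True
      by (auto simp: Xs_def nth_append)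
    moreover have "length (H @ [e]) + k \<le> m" using Suc.prems(2) by simp
    moreover have "Ys n r x (H @ [e]) = Ys n r x H" using Suc.prems(5) unfolding Ys_def
      by (auto simp: nth_append)
    ultimately show ?thesis using Suc.IH[of "H @ [e]"] Suc.prems(3,4,5) True N_def by simp
  qed simp
  have "?v ^ Suc k = ?v * ?v ^ k" by simp
  also have "\<dots> \<le> real a / (real a + real Xb) * ?v ^ k"
    by (intro mult_right_mono ratio_mono) (use a_ge Nm in auto)
  also have "\<dots> \<le> real a * ?v ^ k / real (card (adm n r H))"
  proof -
    have "real a / (real a + real Xb) \<le> real a / real (card (adm n r H))"
      using cpos adm_le by (intro divide_left_mono adm_le) (auto intro!: mult_pos_pos)
    then have "real a / (real a + real Xb) * ?v ^ k \<le> real a / real (card (adm n r H)) * ?v ^ k"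
      by (intro mult_right_mono) (use v0 in auto)
    then show ?thesis by simp
  qed
  also have "real a * ?v ^ k = (\<Sum>e\<in>adm n r H. (if e \<in> Xs n r x then ?v ^ k else 0))"
    unfolding a_def by (simp add: sum.If_cases adm_finite)
  also have "(\<Sum>e\<in>adm n r H. (if e \<in> Xs n r x then ?v ^ k else 0)) / real (card (adm n r H))
     \<le> (\<Sum>e\<in>adm n r H. measure_pmf.prob (procH n r (H @ [e]) k) (?A (H @ [e]))) / card (adm n r H)"
    by (intro divide_right_mono sum_mono tm) auto
  also have "\<dots> = measure_pmf.prob (procH n r H (Suc k)) (?A (H @ [undefined]))"
    using prob_procH_Suc[OF adm0, of k "?A (H @ [undefined])"] by simp
  finally show ?case unfolding N_def by simp
qed

lemma card_Xs:
  assumes "x \<in> {1..n}" "1 \<le> r"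
  shows "card (Xs n r x) = (n - 1) choose (r - 1)"
proof -
  have "Xs n r x = {e. e \<subseteq> {1..n} \<and> card e = r \<and> {x} \<subseteq> e}" unfolding Xs_def by auto
  then show ?thesis using card_supersets[of "{1..n}" "{x}" r] assms by simp
qed

lemma card_Hs:
  assumes "x \<in> {1..n}" "s \<subseteq> {1..n} - {x}" "card s = r"
  shows "card (Hs n r x s) \<le> r * ((n - 2) choose (r - 2))"
proof -
  have fs: "finite s" using assms(2) finite_subset by blast
  have "Hs n r x s \<subseteq> (\<Union>y\<in>s. {e. e \<subseteq> {1..n} \<and> card e = r \<and> {x, y} \<subseteq> e})"
    unfolding Hs_def by blast
  then have "card (Hs n r x s) \<le> card (\<Union>y\<in>s. {e. e \<subseteq> {1..n} \<and> card e = r \<and> {x, y} \<subseteq> e})"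
    by (intro card_mono) (auto intro!: finite_subset[of _ "Pow {1..n}"])
  also have "\<dots> \<le> (\<Sum>y\<in>s. card {e. e \<subseteq> {1..n} \<and> card e = r \<and> {x, y} \<subseteq> e})"
    by (rule card_UN_le[OF fs])
  also have "\<dots> \<le> (\<Sum>y\<in>s. (n - 2) choose (r - 2))"
  proof (rule sum_mono)
    fix y assume y: "y \<in> s"
    then have "y \<noteq> x" "y \<in> {1..n}" using assms by auto
    then have c2: "card {x, y} = 2" by simp
    have "{x, y} \<subseteq> {1..n}" using assms y by auto
    from card_supersets_le[OF _ this, of r] c2
    show "card {e. e \<subseteq> {1..n} \<and> card e = r \<and> {x, y} \<subseteq> e} \<le> (n - 2) choose (r - 2)" by simp
  qed
  also have "\<dots> = r * ((n - 2) choose (r - 2))" using assms by simp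
  finally show ?thesis .
qed

lemma card_star_hit:
  assumes star: "\<forall>i<4. \<forall>j<4. i \<noteq> j \<longrightarrow> H!i \<inter> H!j = {x}"
    and sub: "\<forall>j<4. H!j \<subseteq> {1..n} \<and> card (H!j) = r"
    and x: "x \<in> {1..n}" and k: "k \<le> 4"
  shows "card {e. e \<subseteq> {1..n} - {x} \<and> card e = r \<and> (\<forall>j<k. e \<inter> (H!j - {x}) \<noteq> {})}
     \<le> (r - 1) ^ k * ((n - 1 - k) choose (r - k))"
proof -
  have xin: "x \<in> H!j" if "j < 4" for j
  proof -
    obtain i where "i < 4" "i \<noteq> j" using that by (metis less_numeral_extra(1) zero_less_numeral one_less_numeral_iff semiring_norm(76) zero_neq_one)
    then show ?thesis using star that by blast
  qed
  have "card {e. e \<subseteq> {1..n} - {x} \<and> card e = r \<and> (\<forall>j<k. e \<inter> (H!j - {x}) \<noteq> {})}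
     \<le> (\<Prod>j<k. card (H!j - {x})) * ((card ({1..n} - {x}) - k) choose (r - k))"
  proof (rule card_hit_le)
    show "\<forall>j<k. H ! j - {x} \<subseteq> {1..n} - {x}"
    proof (intro allI impI)
      fix j assume "j < k"
      then have "H!j \<subseteq> {1..n}" using sub k by simp
      then show "H ! j - {x} \<subseteq> {1..n} - {x}" by blast
    qed
    show "\<forall>i<k. \<forall>j<k. i \<noteq> j \<longrightarrow> (H ! i - {x}) \<inter> (H ! j - {x}) = {}"
    proof (intro allI impI)
      fix i j assume "i < k" "j < k" "i \<noteq> j"
      then have "H!i \<inter> H!j = {x}" using star k by auto
      then show "(H ! i - {x}) \<inter> (H ! j - {x}) = {}" by blast
    qed
  qed simp
  also have "(\<Prod>j<k. card (H!j - {x})) = (r - 1) ^ k"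
  proof -
    have "card (H!j - {x}) = r - 1" if "j < k" for j
    proof -
      have "finite (H!j)" using sub that k by (meson finite_atLeastAtMost finite_subset le_trans not_less order.strict_trans2)
      then show ?thesis using sub xin that k by (simp add: card_Diff_singleton)
    qed
    then show ?thesis by simp
  qed
  also have "card ({1..n} - {x}) = n - 1" using x by simp
  finally show ?thesis .
qed

definition cbound :: "nat \<Rightarrow> nat \<Rightarrow> real" where
  "cbound n r = real ((r - 1) ^ 4 * ((n - 5) choose (r - 4))) *
     (real (r * ((n - 2) choose (r - 2))) / (real ((n - 1) choose (r - 1)) - real (3 * r))) ^ (3 * r - 4) /
     ((real ((n - 1) choose (r - 1)) - real (3 * r)) /
      (real ((n - 1) choose (r - 1)) + real ((r - 1) ^ 3 * ((n - 4) choose (r - 3))))) ^ (3 * r - 4)"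

lemma pointwise:
  assumes r2: "2 \<le> r" and NNm: "real ((n - 1) choose (r - 1)) > real (3 * r)"
    and H: "H \<in> set_pmf (procH n r [] 4)"
  shows "measure_pmf.prob (procH n r H (3 * r - 4)) {F. evD n r F \<and> evB (3 * r) F \<and> evA 4 F}
    \<le> cbound n r * measure_pmf.prob (procH n r H (3 * r - 4)) {F. evB (3 * r) F \<and> evA 4 F}"
proof -
  define K where "K = 3 * r - 4"
  define NN where "NN = real ((n - 1) choose (r - 1))"
  define m where "m = 3 * r"
  define w where "w = real (r * ((n - 2) choose (r - 2))) / (NN - real m)"
  define v where "v = (NN - real m) / (NN + real ((r - 1) ^ 3 * ((n - 4) choose (r - 3))))"
  define Sb where "Sb = (r - 1) ^ 4 * ((n - 5) choose (r - 4))"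
  define P where "P = procH n r H K"
  define DE where "DE = {F. evD n r F \<and> evB (3 * r) F \<and> evA 4 F}"
  define EV where "EV = {F. evB (3 * r) F \<and> evA 4 F}"
  have NNm': "NN - real m > 0" using NNm unfolding NN_def m_def by simp
  have w0: "w \<ge> 0" unfolding w_def using NNm' by simp
  have v0: "v > 0" unfolding v_def using NNm' by (intro divide_pos_pos add_pos_nonneg) auto
  have cb: "cbound n r = real Sb * w ^ K / v ^ K"
    unfolding cbound_def Sb_def w_def v_def K_def NN_def m_def by simp
  have cb0: "cbound n r \<ge> 0" unfolding cb using w0 v0 by simp
  from set_procH[OF H] have Hlen: "length H \<le> 4"
    and Hsub: "\<forall>j<length H. H!j \<subseteq> {1..n} \<and> card (H!j) = r" by auto
  have supp: "take (length H) F = H \<and> length F \<le> length H + K" if "F \<in> set_pmf P" for F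
    using set_procH[of F n r H K] that unfolding P_def by auto
  have Fnth: "F ! j = H ! j" if "F \<in> set_pmf P" "j < length H" for F j
  proof -
    have "F ! j = take (length H) F ! j" using that by simp
    then show ?thesis using supp[OF that(1)] by simp
  qed
  have star_eq: "is_star 4 F = is_star 4 H" if "F \<in> set_pmf P" "length H = 4" for F
    unfolding is_star_def using Fnth[OF that(1)] that(2) by auto
  have m4: "K + 4 = m" unfolding K_def m_def using r2 by simp
  show ?thesis
  proof (cases "length H = 4 \<and> is_star 4 H")
    case False
    have "measure_pmf.prob P DE = 0"
    proof (rule prob_zeroI)
      fix F assume F: "F \<in> set_pmf P"
      show "F \<notin> DE"
      proof
        assume "F \<in> DE"
        then have "3 * r \<le> length F" "is_star 4 F" unfolding DE_def evB_def evA_def by auto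
        then have "length H = 4" using supp[OF F] Hlen m4 unfolding m_def by simp
        then show False using False star_eq[OF F] \<open>is_star 4 F\<close> by simp
      qed
    qed
    then show ?thesis using cb0 unfolding P_def DE_def EV_def K_def by simp
  next
    case True
    then have lH: "length H = 4" and "is_star 4 H" by auto
    then obtain x where star: "\<forall>i<4. \<forall>j<4. i \<noteq> j \<longrightarrow> H!i \<inter> H!j = {x}"
      unfolding is_star_def by auto
    have xin: "x \<in> H!j" if "j < 4" for j
    proof -
      obtain i :: nat where "i < 4" "i \<noteq> j" using that
        by (metis less_numeral_extra(1) zero_less_numeral one_less_numeral_iff semiring_norm(76) zero_neq_one)
      then show ?thesis using star that by blast
    qed
    have Hsub4: "\<forall>j<4. H!j \<subseteq> {1..n} \<and> card (H!j) = r" using Hsub lH by simp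
    have xn: "x \<in> {1..n}"
    proof -
      have "H!0 \<subseteq> {1..n}" using Hsub4 by simp
      moreover have "x \<in> H!0" using xin[of 0] by simp
      ultimately show ?thesis by blast
    qed
    have allxH: "\<forall>j<length H. x \<in> H!j" using xin lH by simp
    have cXs: "real (card (Xs n r x)) = NN" unfolding NN_def using card_Xs[OF xn] r2 by simp
    have Xsm: "real (card (Xs n r x)) > real m" using cXs NNm' by simp
    have lenK: "length H + K \<le> m" using lH m4 by simp
    define A2 where "A2 = {F. length F = length H + K \<and> (\<forall>j<length F. x \<in> F!j)}"
    have Ysb: "card (Ys n r x H) \<le> (r - 1) ^ 3 * ((n - 4) choose (r - 3))"
    proof -
      have "Ys n r x H \<subseteq> {e. e \<subseteq> {1..n} - {x} \<and> card e = r \<and> (\<forall>j<3. e \<inter> (H!j - {x}) \<noteq> {})}"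
        unfolding Ys_def by blast
      then have "card (Ys n r x H) \<le> card {e. e \<subseteq> {1..n} - {x} \<and> card e = r \<and> (\<forall>j<3. e \<inter> (H!j - {x}) \<noteq> {})}"
        by (intro card_mono) (auto intro!: finite_subset[of _ "Pow {1..n}"])
      also have "\<dots> \<le> (r - 1) ^ 3 * ((n - 1 - 3) choose (r - 3))"
        by (rule card_star_hit[OF star Hsub4 xn]) simp
      finally show ?thesis by (simp add: numeral_eq_Suc)
    qed
    have VB: "measure_pmf.prob P A2 \<ge> v ^ K"
      using V_bound[OF allxH lenK Xsm Ysb] lH unfolding P_def A2_def v_def cXs by simp
    have A2EV: "A2 \<inter> set_pmf P \<subseteq> EV"
    proof
      fix F assume F: "F \<in> A2 \<inter> set_pmf P"
      then have lF: "length F = m" and ax: "\<forall>j<length F. x \<in> F!j" unfolding A2_def using m4 lH by auto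
      have "x \<in> \<Inter> (set (take (3 * r) F))" using lF ax unfolding m_def by (auto simp: in_set_conv_nth)
      moreover have "is_star 4 F" using star_eq[of F] F lH \<open>is_star 4 H\<close> by simp
      ultimately show "F \<in> EV" unfolding EV_def evB_def evA_def using lF r2 unfolding m_def by auto
    qed
    have EVge: "measure_pmf.prob P EV \<ge> v ^ K"
    proof -
      have "measure_pmf.prob P A2 = measure_pmf.prob P (A2 \<inter> set_pmf P)" by (simp add: measure_Int_set_pmf)
      also have "\<dots> \<le> measure_pmf.prob P EV" by (rule measure_pmf.finite_measure_mono[OF A2EV]) simp
      finally show ?thesis using VB by simp
    qed
    define S where "S = {s. s \<subseteq> {1..n} - {x} \<and> card s = r \<and> (\<forall>j<4. s \<inter> (H!j - {x}) \<noteq> {})}"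
    define As where "As = (\<lambda>s. {F. length F = length H + K \<and> (\<forall>j<length F. x \<in> F!j \<and> F!j \<inter> s \<noteq> {})})"
    have finS: "finite S" unfolding S_def by (rule finite_subset[of _ "Pow {1..n}"]) auto
    have cS: "card S \<le> Sb" unfolding S_def Sb_def
      using card_star_hit[OF star Hsub4 xn, of 4] by (simp add: numeral_eq_Suc)
    have DEsub: "DE \<inter> set_pmf P \<subseteq> (\<Union>s\<in>S. As s)"
    proof
      fix F assume F: "F \<in> DE \<inter> set_pmf P"
      then have dF: "evD n r F" and bF: "evB (3 * r) F" and FP: "F \<in> set_pmf P" unfolding DE_def by auto
      from bF have l1: "3 * r \<le> length F" and ne: "\<Inter> (set (take (3 * r) F)) \<noteq> {}" unfolding evB_def by auto
      have lF: "length F = m" using l1 supp[OF FP] lenK unfolding m_def by simp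
      have tk: "take (3 * r) F = F" using lF unfolding m_def by simp
      obtain y where y: "y \<in> \<Inter> (set F)" using ne tk by auto
      have "0 < length F" "1 < length F" using lF r2 unfolding m_def by auto
      then have "F!0 \<in> set F" "F!1 \<in> set F" by (auto intro: nth_mem)
      then have "y \<in> F!0" "y \<in> F!1" using y by auto
      then have "y \<in> H!0 \<inter> H!1" using Fnth[OF FP] lH by simp
      then have yx: "y = x" using star by auto
      have ax: "\<forall>j<length F. x \<in> F!j" using y yx by auto
      from dF obtain s where s: "s \<subseteq> {1..n}" "card s = r" "\<forall>j<3 * r. s \<inter> F ! j \<noteq> {}"
        "s \<inter> \<Inter> (set (take (3 * r) F)) = {}" unfolding evD_def by blast
      have xs: "x \<notin> s" using s(4) y yx tk by auto
      have "s \<in> S"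
      proof -
        have "\<forall>j<4. s \<inter> (H!j - {x}) \<noteq> {}"
        proof (intro allI impI)
          fix j :: nat assume j: "j < 4"
          then have "j < 3 * r" using r2 by simp
          then have "s \<inter> F!j \<noteq> {}" using s(3) by simp
          moreover have "F!j = H!j" using Fnth[OF FP] j lH by simp
          ultimately show "s \<inter> (H!j - {x}) \<noteq> {}" using xs by auto
        qed
        then show ?thesis unfolding S_def using s xs by auto
      qed
      moreover have "F \<in> As s" unfolding As_def using lF lenK lH m4 ax s(3) lF
        unfolding m_def by (auto simp: Int_commute)
      ultimately show "F \<in> (\<Union>s\<in>S. As s)" by blast
    qed
    have Asb: "measure_pmf.prob P (As s) \<le> w ^ K" if s: "s \<in> S" for s
    proof -
      have "measure_pmf.prob P (As s) \<le> (real (card (Hs n r x s)) / (real (card (Xs n r x)) - real m)) ^ K"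
        using W_bound[OF allxH lenK Xsm, of s] unfolding P_def As_def by simp
      also have "\<dots> \<le> w ^ K"
      proof (rule power_mono)
        have "card (Hs n r x s) \<le> r * ((n - 2) choose (r - 2))"
          using s unfolding S_def by (intro card_Hs[OF xn]) auto
        then have "real (card (Hs n r x s)) \<le> real (r * ((n - 2) choose (r - 2)))" by (simp only: of_nat_le_iff)
        then show "real (card (Hs n r x s)) / (real (card (Xs n r x)) - real m) \<le> w"
          unfolding w_def cXs using NNm' by (intro divide_right_mono) (auto simp del: of_nat_mult)
      qed (use NNm' cXs in simp)
      finally show ?thesis .
    qed
    have "measure_pmf.prob P DE = measure_pmf.prob P (DE \<inter> set_pmf P)" by (simp add: measure_Int_set_pmf)
    also have "\<dots> \<le> measure_pmf.prob P (\<Union>s\<in>S. As s)" by (rule measure_pmf.finite_measure_mono[OF DEsub]) simp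
    also have "\<dots> \<le> (\<Sum>s\<in>S. measure_pmf.prob P (As s))"
      by (rule measure_pmf.finite_measure_subadditive_finite[OF finS]) auto
    also have "\<dots> \<le> (\<Sum>s\<in>S. w ^ K)" by (rule sum_mono) (rule Asb)
    also have "\<dots> = real (card S) * w ^ K" by simp
    also have "\<dots> \<le> real Sb * w ^ K" using cS w0 by (intro mult_right_mono) auto
    also have "\<dots> = cbound n r * v ^ K" unfolding cb using v0 by simp
    also have "\<dots> \<le> cbound n r * measure_pmf.prob P EV" using EVge cb0 by (rule mult_left_mono)
    finally show ?thesis unfolding P_def DE_def EV_def K_def .
  qed
qed



lemma NN_ge:
  assumes r2: "2 \<le> r" and n16: "16 * r^2 \<le> n"
  shows "6 * r \<le> (n - 1) choose (r - 1)"
proof -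
  have "r \<le> 16 * r^2" using le_square[of r] by (simp add: power2_eq_square)
  then have rn: "r \<le> n" using n16 by linarith
  have e: "Suc (n - 2) * ((n - 2) choose (r - 2)) = (Suc (n - 2) choose Suc (r - 2)) * Suc (r - 2)"
    by (rule Suc_times_binomial_eq)
  have s1: "Suc (n - 2) = n - 1" "Suc (r - 2) = r - 1" using r2 rn by auto
  have c1: "(n - 2) choose (r - 2) \<ge> 1" using rn r2 by (simp add: Suc_le_eq)
  have "n - 1 \<le> (n - 1) * ((n - 2) choose (r - 2))" using c1 by simp
  also have "\<dots> = ((n - 1) choose (r - 1)) * (r - 1)" using e s1 by simp
  finally have a: "n - 1 \<le> ((n - 1) choose (r - 1)) * (r - 1)" .
  have "6 * r * (r - 1) \<le> n - 1"
  proof -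
    have "6 * r * (r - 1) \<le> 6 * r * r" by simp
    moreover have "6 * r * r + 1 \<le> 16 * r^2" using r2 by (simp add: power2_eq_square)
    ultimately have "6 * r * (r - 1) + 1 \<le> 16 * r^2" by linarith
    then show ?thesis using n16 by linarith
  qed
  then have "6 * r * (r - 1) \<le> ((n - 1) choose (r - 1)) * (r - 1)" using a by linarith
  then show ?thesis using r2 by simp
qed

lemma Xb_le:
  assumes r2: "2 \<le> r" and n4: "4 \<le> n" and big: "4 * r ^ 5 \<le> n ^ 2"
  shows "(r - 1) ^ 3 * ((n - 4) choose (r - 3)) \<le> (n - 1) choose (r - 1)"
proof (cases "r = 2")
  case True
  then show ?thesis using n4 by simp
next
  case False
  then have r3: "3 \<le> r" using r2 by simp
  have e1: "Suc (n - 2) * ((n - 2) choose (r - 2)) = (Suc (n - 2) choose Suc (r - 2)) * Suc (r - 2)"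
    by (rule Suc_times_binomial_eq)
  have e2: "Suc (n - 3) * ((n - 3) choose (r - 3)) = (Suc (n - 3) choose Suc (r - 3)) * Suc (r - 3)"
    by (rule Suc_times_binomial_eq)
  have s: "Suc (n - 2) = n - 1" "Suc (r - 2) = r - 1" "Suc (n - 3) = n - 2" "Suc (r - 3) = r - 2"
    using r3 n4 by auto
  have E: "((n - 1) choose (r - 1)) * ((r - 1) * (r - 2)) = (n - 1) * (n - 2) * ((n - 3) choose (r - 3))"
  proof -
    have "((n - 1) choose (r - 1)) * ((r - 1) * (r - 2)) = ((n - 1) * ((n - 2) choose (r - 2))) * (r - 2)"
      using e1 s by (simp add: mult.assoc)
    also have "\<dots> = (n - 1) * (((n - 2) choose (r - 2)) * (r - 2))" by (simp add: mult.assoc)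
    also have "((n - 2) choose (r - 2)) * (r - 2) = (n - 2) * ((n - 3) choose (r - 3))" using e2 s by simp
    finally show ?thesis by (simp add: mult.assoc)
  qed
  have m1: "(n - 4) choose (r - 3) \<le> (n - 3) choose (r - 3)" by (rule binomial_right_mono) simp
  have pw: "(r - 1) ^ 4 * (r - 2) \<le> (n - 1) * (n - 2)"
  proof -
    have "(r - 1) ^ 4 * (r - 2) \<le> r ^ 4 * r" by (intro mult_le_mono power_mono) auto
    also have "\<dots> = r ^ 5" by (simp add: power_Suc2[symmetric] del: power_Suc)
    finally have a: "4 * ((r - 1) ^ 4 * (r - 2)) \<le> n ^ 2" using big by linarith
    have "n ^ 2 \<le> 4 * ((n - 1) * (n - 2))"
    proof -
      obtain k where k: "n = k + 4" using n4 by (metis add.commute le_Suc_ex)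
      show ?thesis unfolding k by (simp add: power2_eq_square algebra_simps)
    qed
    then show ?thesis using a by linarith
  qed
  have "(r - 1) ^ 3 * ((n - 4) choose (r - 3)) * ((r - 1) * (r - 2)) \<le> (r - 1) ^ 3 * ((n - 3) choose (r - 3)) * ((r - 1) * (r - 2))"
    using m1 by simp
  also have "\<dots> = ((r - 1) ^ 4 * (r - 2)) * ((n - 3) choose (r - 3))"
  proof -
    have p4: "(r - 1) ^ 4 = (r - 1) ^ 3 * (r - 1)" by (simp add: power_Suc2[symmetric] del: power_Suc)
    show ?thesis unfolding p4 by (simp only: mult_ac)
  qed
  also have "\<dots> \<le> ((n - 1) * (n - 2)) * ((n - 3) choose (r - 3))" using pw by simp
  also have "\<dots> = ((n - 1) choose (r - 1)) * ((r - 1) * (r - 2))" using E by simp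
  finally show ?thesis using r3 by simp
qed

lemma fact_exp:
  fixes x :: real
  assumes "0 \<le> x"
  shows "x ^ p / fact p \<le> exp x"
proof -
  have sm: "(\<lambda>n. x ^ n / fact n) sums exp x"
    using exp_converges[of x] by (simp add: divide_inverse_commute)
  have "(\<Sum>n\<in>{p}. x ^ n / fact n) \<le> (\<Sum>n. x ^ n / fact n)"
    by (rule sum_le_suminf) (use sm assms in \<open>auto simp: sums_iff\<close>)
  then show ?thesis using sm by (simp add: sums_iff)
qed

lemma pow_fact_le:
  fixes y :: real
  assumes "0 \<le> y" "1 \<le> p"
  shows "y ^ p / fact p \<le> (exp 1 * y / real p) ^ p"
proof -
  have pp: "real p > 0" using assms by simp
  have "y ^ p / fact p = (y / real p) ^ p * (real p ^ p / fact p)"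
    using pp by (simp add: power_divide)
  also have "\<dots> \<le> (y / real p) ^ p * exp (real p)"
    by (intro mult_left_mono fact_exp) (use assms in auto)
  also have "exp (real p) = exp 1 ^ p" using exp_of_nat_mult[of p 1] by simp
  also have "(y / real p) ^ p * exp 1 ^ p = (exp 1 * y / real p) ^ p"
    by (simp add: power_mult_distrib[symmetric] mult.commute)
  finally show ?thesis .
qed

lemma hb_eq:
  assumes "2 \<le> r" "2 \<le> n"
  shows "real (n - 1) * real ((n - 2) choose (r - 2)) = real (r - 1) * real ((n - 1) choose (r - 1))"
proof -
  have e1: "Suc (n - 2) * ((n - 2) choose (r - 2)) = (Suc (n - 2) choose Suc (r - 2)) * Suc (r - 2)"
    by (rule Suc_times_binomial_eq)
  have s: "Suc (n - 2) = n - 1" "Suc (r - 2) = r - 1" using assms by auto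
  have "(n - 1) * ((n - 2) choose (r - 2)) = (r - 1) * ((n - 1) choose (r - 1))" using e1 s by simp
  then show ?thesis by (metis of_nat_mult)
qed

lemma cbound_le:
  assumes r2: "2 \<le> r" and n16: "16 * r^2 \<le> n"
    and xb: "(r - 1) ^ 3 * ((n - 4) choose (r - 3)) \<le> (n - 1) choose (r - 1)"
    and big: "61440 * real r ^ 5 \<le> real n ^ 2"
  shows "cbound n r \<le> 16^8 * real r ^ 20 / real n ^ 8 + 81 * 144^2 / real n ^ 2"
proof -
  define NN where "NN = real ((n - 1) choose (r - 1))"
  define m where "m = real (3 * r)"
  define hb where "hb = real (r * ((n - 2) choose (r - 2)))"
  define Xb where "Xb = real ((r - 1) ^ 3 * ((n - 4) choose (r - 3)))"
  define Sb where "Sb = real ((r - 1) ^ 4 * ((n - 5) choose (r - 4)))"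
  define K where "K = 3 * r - 4"
  define \<rho> where "\<rho> = 16 * real r ^ 2 / real n"
  have "real (16 * r^2) \<le> real n" using n16 by (simp only: of_nat_le_iff)
  then have rn: "16 * real r ^ 2 \<le> real n" by simp
  have r0: "real r \<ge> 2" using r2 by simp
  have n2: "real n \<ge> 64"
  proof -
    have "(2::real) ^ 2 \<le> real r ^ 2" using r0 by (intro power_mono) auto
    then have "64 \<le> 16 * real r ^ 2" by simp
    then show ?thesis using rn by linarith
  qed
  have nn2: "2 \<le> n" using n2 by linarith
  have "real (6 * r) \<le> NN" unfolding NN_def using NN_ge[OF r2 n16] by (simp only: of_nat_le_iff)
  then have NN6: "NN \<ge> 6 * real r" by simp
  have NNpos: "NN > 0" using NN6 r0 by linarith
  have NNm: "NN - m \<ge> NN / 2" unfolding m_def using NN6 by simp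
  have Xb_le: "Xb \<le> NN" unfolding Xb_def NN_def using xb by (simp only: of_nat_le_iff)
  have Xb0: "Xb \<ge> 0" unfolding Xb_def by simp
  have hb0: "hb \<ge> 0" unfolding hb_def by simp
  have hbid: "hb * real (n - 1) = real r * real (r - 1) * NN"
    unfolding hb_def NN_def using hb_eq[OF r2 nn2] by (simp add: algebra_simps)
  have n1: "real (n - 1) = real n - 1" using nn2 by simp
  have r1: "real (r - 1) = real r - 1" using r2 by simp
  have eqq: "(hb / (NN - m)) / ((NN - m) / (NN + Xb)) = hb * (NN + Xb) / (NN - m)^2"
    using NNm NNpos Xb0 by (simp add: power2_eq_square field_simps)
  have cb: "cbound n r = Sb * (hb * (NN + Xb) / (NN - m)^2) ^ K"
  proof -
    have "cbound n r = Sb * (hb / (NN - m)) ^ K / ((NN - m) / (NN + Xb)) ^ K"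
      unfolding cbound_def Sb_def hb_def NN_def m_def Xb_def K_def by simp
    also have "\<dots> = Sb * ((hb / (NN - m)) / ((NN - m) / (NN + Xb))) ^ K" by (simp only: power_divide times_divide_eq_right)
    finally show ?thesis unfolding eqq .
  qed
  define q where "q = hb * (NN + Xb) / (NN - m)^2"
  have q0: "q \<ge> 0" unfolding q_def using hb0 Xb0 NNpos by simp
  have q8: "q \<le> 8 * hb / NN"
  proof -
    have "q \<le> hb * (2 * NN) / (NN / 2)^2" unfolding q_def
    proof (intro frac_le mult_left_mono power_mono)
      show "NN + Xb \<le> 2 * NN" using Xb_le by simp
    qed (use hb0 NNpos NNm Xb0 in auto)
    also have "\<dots> = 8 * hb / NN" using NNpos by (simp add: power2_eq_square field_simps)
    finally show ?thesis .
  qed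
  have qr: "q \<le> \<rho>"
  proof -
    have "8 * hb / NN = 8 * real r * (real r - 1) / (real n - 1)"
      using hbid NNpos nn2 n1 r1 by (simp add: field_simps)
    also have "\<dots> \<le> 16 * real r ^ 2 / real n"
    proof -
      have "8 * real r * (real r - 1) * real n \<le> 16 * real r ^ 2 * (real n - 1)"
      proof -
        have "16 * real r ^ 2 * (real n - 1) - 8 * real r * (real r - 1) * real n
            = 8 * real r * (real r * real n + real n - 2 * real r)" by (simp add: power2_eq_square algebra_simps)
        also have "\<dots> \<ge> 0" using r0 n2 by (intro mult_nonneg_nonneg) (auto simp: algebra_simps intro: add_increasing mult_mono)
        finally show ?thesis by simp
      qed
      then show ?thesis using n2 by (simp add: field_simps)
    qed
    finally show ?thesis using q8 unfolding \<rho>_def by simp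
  qed
  have \<rho>1: "\<rho> \<le> 1" unfolding \<rho>_def using rn n2 by simp
  have \<rho>0: "\<rho> \<ge> 0" unfolding \<rho>_def by simp
  have cbq: "cbound n r \<le> Sb * \<rho> ^ K"
    unfolding cb q_def[symmetric] using q0 qr by (intro mult_left_mono power_mono) (auto simp: Sb_def)
  show ?thesis
  proof (cases "r \<le> 3")
    case True
    have Sb16: "Sb \<le> 16"
    proof -
      have "r - 1 \<le> 2" using True by simp
      then have "(r - 1) ^ 4 \<le> 2 ^ 4" by (rule power_mono) simp
      then have a: "real ((r - 1) ^ 4) \<le> real (2 ^ 4)" by (simp only: of_nat_le_iff)
      have "Sb = real ((r - 1) ^ 4)" unfolding Sb_def using True by simp
      then show ?thesis using a by simp
    qed
    have K2: "2 \<le> K" unfolding K_def using r2 by simp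
    have "\<rho> ^ K \<le> \<rho> ^ 2" using K2 \<rho>0 \<rho>1 by (rule power_decreasing)
    also have "\<rho> \<le> 144 / real n" unfolding \<rho>_def
    proof (rule divide_right_mono)
      have "real r \<le> 3" using True by simp
      then have "real r ^ 2 \<le> 3 ^ 2" using r0 by (intro power_mono) auto
      then show "16 * real r ^ 2 \<le> 144" by simp
    qed simp
    then have "\<rho> ^ 2 \<le> (144 / real n) ^ 2" using \<rho>0 by (intro power_mono) auto
    finally have "\<rho> ^ K \<le> (144 / real n) ^ 2" using \<rho>0 by simp
    then have "Sb * \<rho> ^ K \<le> 16 * (144 / real n) ^ 2"
      using Sb16 \<rho>0 by (intro mult_mono) (auto simp: Sb_def)
    also have "\<dots> \<le> 81 * 144^2 / real n ^ 2" by (simp add: power_divide divide_right_mono)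
    also have "\<dots> \<le> 16^8 * real r ^ 20 / real n ^ 8 + 81 * 144^2 / real n ^ 2" by simp
    finally show ?thesis using cbq by simp
  next
    case False
    define p where "p = r - 4"
    have Kp: "K = 3 * p + 8" unfolding K_def p_def using False by simp
    have Sb_le: "Sb \<le> real r ^ 4 * (real n ^ p / fact p)"
    proof -
      have c1: "((n - 5) choose p) * fact p \<le> (n - 5) ^ p" by (rule binomial_fact_pow)
      have "(n - 5) ^ p \<le> n ^ p" by (intro power_mono) auto
      then have "real ((n - 5) choose p) * fact p \<le> real n ^ p" using c1
        by (metis (mono_tags, lifting) le_trans of_nat_fact of_nat_le_iff of_nat_mult of_nat_power)
      then have c2: "real ((n - 5) choose p) \<le> real n ^ p / fact p" by (simp add: field_simps)
      have c3: "real ((r - 1) ^ 4) \<le> real r ^ 4" by (simp add: power_mono)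
      show ?thesis unfolding Sb_def p_def[symmetric] using c2 c3 by (simp only: of_nat_mult) (intro mult_mono, auto)
    qed
    define y where "y = real n * \<rho> ^ 3"
    have y0: "y \<ge> 0" unfolding y_def using \<rho>0 by simp
    have yle: "y ^ p / fact p \<le> 1"
    proof (cases "p = 0")
      case True then show ?thesis by simp
    next
      case False
      then have p1: "1 \<le> p" by simp
      have "y ^ p / fact p \<le> (exp 1 * y / real p) ^ p" by (rule pow_fact_le[OF y0 p1])
      also have "\<dots> \<le> 1"
      proof (rule power_le_one)
        show "0 \<le> exp 1 * y / real p" using y0 by simp
        have r3: "\<rho>^3 = 16^3 * real r ^ 6 / real n ^ 3" unfolding \<rho>_def
          by (simp add: power_divide power_mult_distrib power_mult[symmetric])
        have n3: "real n ^ 3 = real n * real n ^ 2" by (simp add: power3_eq_cube power2_eq_square)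
        have yv: "y = 16^3 * real r ^ 6 / real n ^ 2" unfolding y_def r3 n3 using n2 by simp
        have r5: "5 \<le> r" using p1 unfolding p_def by simp
        have rp: "real r \<le> 5 * real p" unfolding p_def using r5 by simp
        have e3: "exp 1 \<le> (3::real)" using exp_le by simp
        have "exp 1 * (16^3 * real r ^ 6) \<le> 3 * (16^3 * (real r ^ 5 * (5 * real p)))"
        proof (intro mult_mono)
          show "real r ^ 6 \<le> real r ^ 5 * (5 * real p)"
          proof -
            have "real r ^ 6 = real r ^ 5 * real r" using power_add[of "real r" 5 1] by simp
            also have "\<dots> \<le> real r ^ 5 * (5 * real p)" using rp r0 by (intro mult_left_mono) auto
            finally show ?thesis .
          qed
        qed (use e3 in auto)
        also have "\<dots> = real p * (61440 * real r ^ 5)" by simp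
        also have "\<dots> \<le> real p * real n ^ 2" using big by (intro mult_left_mono) auto
        finally have "exp 1 * (16^3 * real r ^ 6) \<le> real p * real n ^ 2" .
        then show "exp 1 * y / real p \<le> 1" unfolding yv using p1 n2 by (simp add: field_simps)
      qed
      finally show ?thesis .
    qed
    have "Sb * \<rho> ^ K \<le> real r ^ 4 * (real n ^ p / fact p) * \<rho> ^ K"
      using Sb_le \<rho>0 by (intro mult_right_mono) auto
    also have "\<dots> = real r ^ 4 * \<rho> ^ 8 * (y ^ p / fact p)"
    proof -
      have "\<rho> ^ K = (\<rho> ^ 3) ^ p * \<rho> ^ 8" unfolding Kp by (simp add: power_add power_mult)
      moreover have "y ^ p = real n ^ p * (\<rho> ^ 3) ^ p" unfolding y_def by (simp add: power_mult_distrib)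
      ultimately show ?thesis by simp
    qed
    also have "\<dots> \<le> real r ^ 4 * \<rho> ^ 8 * 1" using yle \<rho>0 by (intro mult_left_mono) auto
    also have "\<dots> = 16^8 * real r ^ 20 / real n ^ 8" unfolding \<rho>_def
      by (simp add: power_divide power_mult_distrib power_mult[symmetric] field_simps)
    also have "\<dots> \<le> 16^8 * real r ^ 20 / real n ^ 8 + 81 * 144^2 / real n ^ 2" by simp
    finally show ?thesis using cbq by simp
  qed
qed



lemma global_bound:
  assumes r2: "2 \<le> r" and NNm: "real ((n - 1) choose (r - 1)) > real (3 * r)"
  shows "measure_pmf.prob (proc n r (3 * r)) {F. evD n r F \<and> evB (3 * r) F \<and> evA 4 F}
    \<le> cbound n r * measure_pmf.prob (proc n r (3 * r)) {F. evB (3 * r) F \<and> evA 4 F}"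
proof -
  have e: "proc n r (3 * r) = bind_pmf (procH n r [] 4) (\<lambda>H. procH n r H (3 * r - 4))"
  proof -
    have "3 * r = 4 + (3 * r - 4)" using r2 by simp
    then have "proc n r (3 * r) = procH n r [] (4 + (3 * r - 4))" by (metis proc_eq)
    then show ?thesis by (simp only: procH_add)
  qed
  have "measure_pmf.prob (proc n r (3 * r)) {F. evD n r F \<and> evB (3 * r) F \<and> evA 4 F}
      = measure_pmf.expectation (procH n r [] 4) (\<lambda>H. measure_pmf.prob (procH n r H (3 * r - 4)) {F. evD n r F \<and> evB (3 * r) F \<and> evA 4 F})"
    unfolding e by (rule prob_bind_pmf)
  also have "\<dots> \<le> measure_pmf.expectation (procH n r [] 4) (\<lambda>H. cbound n r * measure_pmf.prob (procH n r H (3 * r - 4)) {F. evB (3 * r) F \<and> evA 4 F})"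
  proof (rule integral_mono_AE)
    show "AE H in measure_pmf (procH n r [] 4). measure_pmf.prob (procH n r H (3 * r - 4)) {F. evD n r F \<and> evB (3 * r) F \<and> evA 4 F}
       \<le> cbound n r * measure_pmf.prob (procH n r H (3 * r - 4)) {F. evB (3 * r) F \<and> evA 4 F}"
      by (rule AE_pmfI) (rule pointwise[OF r2 NNm])
  qed (auto intro: integrable_mult_right)
  also have "\<dots> = cbound n r * measure_pmf.expectation (procH n r [] 4) (\<lambda>H. measure_pmf.prob (procH n r H (3 * r - 4)) {F. evB (3 * r) F \<and> evA 4 F})"
    by (rule integral_mult_right_zero)
  also have "measure_pmf.expectation (procH n r [] 4) (\<lambda>H. measure_pmf.prob (procH n r H (3 * r - 4)) {F. evB (3 * r) F \<and> evA 4 F})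
      = measure_pmf.prob (proc n r (3 * r)) {F. evB (3 * r) F \<and> evA 4 F}"
    unfolding e by (rule prob_bind_pmf[symmetric])
  finally show ?thesis .
qed

lemma cbound_nonneg:
  assumes "real ((n - 1) choose (r - 1)) > real (3 * r)"
  shows "cbound n r \<ge> 0"
  unfolding cbound_def using assms by (intro divide_nonneg_nonneg mult_nonneg_nonneg zero_le_power) auto

lemma ratio_bound:
  assumes r2: "2 \<le> r" and NNm: "real ((n - 1) choose (r - 1)) > real (3 * r)"
  shows "measure_pmf.prob (proc n r (3 * r)) {F. evD n r F \<and> evB (3 * r) F \<and> evA 4 F}
       / measure_pmf.prob (proc n r (3 * r)) {F. evB (3 * r) F \<and> evA 4 F} \<le> cbound n r"
proof (cases "measure_pmf.prob (proc n r (3 * r)) {F. evB (3 * r) F \<and> evA 4 F} = 0")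
  case True then show ?thesis using cbound_nonneg[OF NNm] by simp
next
  case False
  then have "measure_pmf.prob (proc n r (3 * r)) {F. evB (3 * r) F \<and> evA 4 F} > 0"
    using measure_nonneg[of "measure_pmf (proc n r (3 * r))"] by (simp add: order_less_le)
  then show ?thesis using global_bound[OF r2 NNm] by (simp add: divide_le_eq)
qed

theorem lemma6:
  fixes r :: "nat \<Rightarrow> nat"
  assumes "\<And>n. r n \<ge> 2"
    and "(\<lambda>n. real (r n)) \<in> o(\<lambda>n. real n powr (2/5))"
  shows "((\<lambda>n. measure_pmf.prob (proc n (r n) (3 * r n))
                  {F. evD n (r n) F \<and> evB (3 * r n) F \<and> evA 4 F}
              / measure_pmf.prob (proc n (r n) (3 * r n))
                  {F. evB (3 * r n) F \<and> evA 4 F}) \<longlongrightarrow> 0) at_top"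
proof -
  define t where "t = (\<lambda>n. real (r n) ^ 5 / real n ^ 2)"
  have "(\<lambda>n. real (r n) ^ 5) \<in> o(\<lambda>n. (real n powr (2/5)) ^ 5)"
    by (rule landau_o.small_power[OF assms(2)]) simp
  then have t0': "((\<lambda>n. real (r n) ^ 5 / (real n powr (2/5)) ^ 5) \<longlongrightarrow> 0) at_top"
    by (rule smalloD_tendsto)
  have t0: "(t \<longlongrightarrow> 0) at_top"
  proof (rule Lim_transform_eventually[OF t0'])
    show "\<forall>\<^sub>F n in at_top. real (r n) ^ 5 / (real n powr (2/5)) ^ 5 = t n"
      using eventually_gt_at_top[of "0::nat"]
    proof eventually_elim
      case (elim n)
      then have "(real n powr (2/5)) ^ 5 = real n powr (real 5 * (2/5))" by (intro powr_power) simp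
      also have "\<dots> = real n powr (real 2)" by simp
      also have "\<dots> = real n ^ 2" using elim by (intro powr_realpow) simp
      finally show ?case unfolding t_def by simp
    qed
  qed
  define B where "B = (\<lambda>n::nat. 16^8 * t n ^ 4 + 81 * 144^2 * inverse (real n) ^ 2)"
  have B0: "(B \<longlongrightarrow> 0) at_top"
  proof -
    have "((\<lambda>n. 16^8 * t n ^ 4) \<longlongrightarrow> 16^8 * 0 ^ 4) at_top" by (intro tendsto_intros t0)
    moreover have "((\<lambda>n::nat. 81 * 144^2 * inverse (real n) ^ 2) \<longlongrightarrow> 81 * 144^2 * 0 ^ 2) at_top"
      by (intro tendsto_intros lim_inverse_n)
    ultimately show ?thesis unfolding B_def using tendsto_add by fastforce
  qed
  have ev: "\<forall>\<^sub>F n in at_top. t n < 1 / 61440 \<and> n \<ge> 16^5"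
    using eventually_conj[OF order_tendstoD(2)[OF t0, of "1/61440"] eventually_ge_at_top[of "16^5::nat"]]
    by simp
  have ub: "\<forall>\<^sub>F n in at_top. measure_pmf.prob (proc n (r n) (3 * r n))
                  {F. evD n (r n) F \<and> evB (3 * r n) F \<and> evA 4 F}
              / measure_pmf.prob (proc n (r n) (3 * r n))
                  {F. evB (3 * r n) F \<and> evA 4 F} \<le> B n"
    using ev
  proof eventually_elim
    case (elim n)
    define k where "k = r n"
    have k2: "2 \<le> k" unfolding k_def using assms(1) by simp
    have nbig: "real n \<ge> 16^5" using elim by simp
    have npos: "real n > 0" using nbig by simp
    have tk: "real k ^ 5 < real n ^ 2 / 61440" using elim npos unfolding t_def k_def by (simp add: field_simps)
    have big: "61440 * real k ^ 5 \<le> real n ^ 2" using tk by simp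
    have big4: "4 * k ^ 5 \<le> n ^ 2"
    proof -
      have "4 * real k ^ 5 \<le> 61440 * real k ^ 5" by simp
      then have "real (4 * k ^ 5) \<le> real (n ^ 2)" using big by (simp only: of_nat_mult of_nat_power of_nat_numeral)
      then show ?thesis by (simp only: of_nat_le_iff)
    qed
    have n16: "16 * k^2 \<le> n"
    proof -
      have "real (16 * k^2) ^ 5 \<le> real n ^ 5"
      proof -
        have "real (16 * k^2) ^ 5 = 16^5 * (real k ^ 5)^2" by (simp add: power_mult_distrib power_mult[symmetric])
        also have "\<dots> \<le> 16^5 * (real n ^ 2 / 61440)^2"
          using tk by (intro mult_left_mono power_mono) auto
        also have "\<dots> = (16^5 / 61440^2) * real n ^ 4" by (simp add: power_divide power_mult[symmetric])
        also have "\<dots> \<le> 1 * real n ^ 4" by (intro mult_right_mono) auto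
        also have "\<dots> \<le> real n * real n ^ 4" using nbig by (intro mult_right_mono) auto
        also have "\<dots> = real n ^ 5" by (simp add: power_Suc[symmetric] del: power_Suc)
        finally show ?thesis .
      qed
      then have "real (16 * k^2) ^ Suc 4 \<le> real n ^ Suc 4" by (simp add: numeral_eq_Suc)
      then have "real (16 * k^2) \<le> real n" by (rule power_le_imp_le_base) simp
      then show ?thesis by (simp only: of_nat_le_iff)
    qed
    have n4: "4 \<le> n" using nbig by simp
    have xb: "(k - 1) ^ 3 * ((n - 4) choose (k - 3)) \<le> (n - 1) choose (k - 1)" by (rule Xb_le[OF k2 n4 big4])
    have NNm: "real ((n - 1) choose (k - 1)) > real (3 * k)"
      using NN_ge[OF k2 n16] k2 by simp
    have "measure_pmf.prob (proc n k (3 * k)) {F. evD n k F \<and> evB (3 * k) F \<and> evA 4 F}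
       / measure_pmf.prob (proc n k (3 * k)) {F. evB (3 * k) F \<and> evA 4 F} \<le> cbound n k"
      by (rule ratio_bound[OF k2 NNm])
    also have "\<dots> \<le> 16^8 * real k ^ 20 / real n ^ 8 + 81 * 144^2 / real n ^ 2"
      by (rule cbound_le[OF k2 n16 xb big])
    also have "\<dots> = B n"
    proof -
      have a: "(real k ^ 5 / real n ^ 2) ^ 4 = real k ^ 20 / real n ^ 8"
        by (simp add: power_divide power_mult[symmetric])
      have b: "inverse (real n) ^ 2 = 1 / real n ^ 2" by (simp add: power_inverse divide_inverse)
      show ?thesis unfolding B_def t_def k_def[symmetric] a b by simp
    qed
    finally show ?case unfolding k_def .
  qed
  have lb: "\<forall>\<^sub>F n in at_top. 0 \<le> measure_pmf.prob (proc n (r n) (3 * r n))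
                  {F. evD n (r n) F \<and> evB (3 * r n) F \<and> evA 4 F}
              / measure_pmf.prob (proc n (r n) (3 * r n))
                  {F. evB (3 * r n) F \<and> evA 4 F}" by simp
  show ?thesis by (rule tendsto_sandwich[OF lb ub tendsto_const B0])
qed

end
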